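(* Let $F=SU(3)/T_{SU(3)}$ and let $z_1,z_2\in H^2(F;\mathbb{C})$ be non-zero with $z_1\cdot z_2=0$. Then there are $\lambda_1,\lambda_2\in\mathbb{C}^*$ such that either $z_1=\lambda_1x_+$ and $z_2=\lambda_2x_-$, or $z_1=\lambda_1x_-$ and $z_2=\lambda_2x_+$, where $x_\pm:=x_1+\tfrac12(1\pm\sqrt{-3})\,x_2$.
   Context: $T_{SU(3)}$ is the maximal torus of diagonal matrices in $SU(3)$, and $H^*(F;\mathbb{C})$ is identified with $\mathbb{C}[x_1,x_2]/(x_1^2+x_2^2+x_1x_2,\;x_1^2x_2+x_1x_2^2)$, $x_1,x_2$ of degree $2$. *)

theory Defs
  imports Complex_Main "HOL-Computational_Algebra.Polynomial"
begin

text \<open>The polynomial ring C[x1,x2] is modelled as (complex poly) poly: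
  polynomials in x2 whose coefficients are polynomials in x1.\<close>

definition cst :: "complex \<Rightarrow> complex poly poly" where
  "cst c = [:[:c:]:]"

definition X1 :: "complex poly poly" where
  "X1 = [:[:0, 1:]:]"

definition X2 :: "complex poly poly" where
  "X2 = [:0, 1:]"

definition rel_ideal :: "complex poly poly set" where
  "rel_ideal = {a * (X1^2 + X2^2 + X1 * X2) + b * (X1^2 * X2 + X1 * X2^2) | a b. True}"

text \<open>Equality of classes in H^*(F;C) = C[x1,x2]/rel_ideal.\<close>
definition coh_eq :: "complex poly poly \<Rightarrow> complex poly poly \<Rightarrow> bool" where
  "coh_eq p q \<longleftrightarrow> p - q \<in> rel_ideal"

text \<open>Representatives of H^2(F;C): linear forms in x1, x2 (x1, x2 of degree 2).\<close>
definition H2 :: "complex poly poly set" where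
  "H2 = {cst a * X1 + cst b * X2 | a b. True}"

definition x_plus :: "complex poly poly" where
  "x_plus = X1 + cst ((1 + \<i> * complex_of_real (sqrt 3)) / 2) * X2"

definition x_minus :: "complex poly poly" where
  "x_minus = X1 + cst ((1 - \<i> * complex_of_real (sqrt 3)) / 2) * X2"

end

theory Submission
  imports Defs
begin

lemma coeff0_eval: "coeff x 0 = 0 \<Longrightarrow> coeff (poly P x) 0 = coeff (coeff P 0) 0"
  by (induct P) (simp_all add: coeff_mult)
lemma s1: "poly (cst a * X1 + cst b * X2) [:0,s:] = [:0, a + b*s:]"
  by (simp add: cst_def X1_def X2_def)
lemma s2: "poly (X1^2 + X2^2 + X1 * X2) [:0,s:] = [:0,0,1 + s + s^2:]"
  by (simp add: X1_def X2_def power2_eq_square algebra_simps)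
lemma s3: "poly (X1^2 * X2 + X1 * X2^2) [:0,s:] = [:0,0,0,s + s^2:]"
  by (simp add: X1_def X2_def power2_eq_square algebra_simps)

lemma key:
  assumes "coh_eq ((cst a * X1 + cst b * X2) * (cst c * X1 + cst d * X2)) 0"
  shows "\<exists>k. \<forall>s. (a + b*s) * (c + d*s) = k * (1 + s + s^2)"
proof -
  from assms obtain A B where e: "(cst a * X1 + cst b * X2) * (cst c * X1 + cst d * X2)
     = A * (X1^2 + X2^2 + X1 * X2) + B * (X1^2 * X2 + X1 * X2^2)"
    by (auto simp: coh_eq_def rel_ideal_def)
  show ?thesis
  proof (intro exI allI)
    fix s :: complex
    have "poly ((cst a * X1 + cst b * X2) * (cst c * X1 + cst d * X2)) [:0,s:]
       = poly (A * (X1^2 + X2^2 + X1 * X2) + B * (X1^2 * X2 + X1 * X2^2)) [:0,s:]"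
      using e by simp
    hence "[:0, a + b*s:] * [:0, c + d*s:] = poly A [:0,s:] * [:0,0,1 + s + s^2:]
       + poly B [:0,s:] * [:0,0,0,s + s^2:]"
      by (subst (asm) poly_mult, subst (asm) poly_add, subst (asm) poly_mult, subst (asm) poly_mult) (simp only: s1 s2 s3)
    hence "coeff ([:0, a + b*s:] * [:0, c + d*s:]) 2 = coeff (poly A [:0,s:] * [:0,0,1 + s + s^2:]
       + poly B [:0,s:] * [:0,0,0,s + s^2:]) 2" by simp
    hence "(a + b*s) * (c + d*s) = coeff (poly A [:0,s:]) 0 * (1 + s + s^2)"
      by (simp add: numeral_2_eq_2 mult_pCons_right coeff_pCons) (metis mult.commute)
    thus "(a + b*s) * (c + d*s) = coeff (coeff A 0) 0 * (1 + s + s^2)"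
      by (simp add: coeff0_eval)
  qed
qed


definition "w1 = (1 + \<i> * complex_of_real (sqrt 3)) / 2"
definition "w2 = (1 - \<i> * complex_of_real (sqrt 3)) / 2"
lemma r: "complex_of_real (sqrt 3) * complex_of_real (sqrt 3) = 3"
  by (simp flip: of_real_mult)
lemma w12: "w1 * w2 = 1" "w1 + w2 = 1"
proof -
  define r where "r = complex_of_real (sqrt 3)"
  have r: "r * r = 3" unfolding r_def by (rule r)
  have "w1 * w2 = (1 - (\<i>*\<i>)*(r*r)) / 4" unfolding w1_def w2_def r_def[symmetric]
    by (simp add: algebra_simps)
  also have "\<dots> = 1" using r by simp
  finally show "w1 * w2 = 1" .
  show "w1 + w2 = 1" unfolding w1_def w2_def by (simp add: add_divide_distrib[symmetric])
qed

lemma roots: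
  fixes a b c d k :: complex
  assumes "a \<noteq> 0" "b \<noteq> 0" "c \<noteq> 0" "d \<noteq> 0" and e1: "a*c = k" and e2: "b*d = k" and e3: "a*d+b*c = k"
  shows "(b = a*w1 \<and> d = c*w2) \<or> (b = a*w2 \<and> d = c*w1)"
proof -
  have "a*b*(a*d+b*c) = a*b*k" using e3 by simp
  moreover have "a*b*(a*d+b*c) = a*a*(b*d) + b*b*(a*c)" by (simp add: algebra_simps)
  ultimately have "a*a*k + b*b*k = a*b*k" unfolding e1 e2 by simp
  hence "k*(a*a + b*b - a*b) = 0" by (simp add: algebra_simps)
  moreover have "k \<noteq> 0" using e1 assms(1,3) by auto
  ultimately have q: "a*a + b*b - a*b = 0" by simp
  have "(b - a*w1) * (b - a*w2) = b*b - a*b*(w1+w2) + a*a*(w1*w2)"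
    by (simp add: algebra_simps)
  also have "\<dots> = a*a + b*b - a*b" unfolding w12 by simp
  finally have "(b - a*w1) * (b - a*w2) = 0" using q by simp
  hence "b = a*w1 \<or> b = a*w2" by simp
  thus ?thesis
  proof
    assume h: "b = a*w1"
    have "a*(w1*d) = a*c" using e1 e2 h by (simp add: mult.assoc)
    hence "w1*d = c" using assms(1) by simp
    hence "w2*(w1*d) = w2*c" by simp
    hence "(w1*w2)*d = c*w2" by (simp add: ac_simps)
    thus ?thesis using h w12 by simp
  next
    assume h: "b = a*w2"
    have "a*(w2*d) = a*c" using e1 e2 h by (simp add: mult.assoc)
    hence "w2*d = c" using assms(1) by simp
    hence "w1*(w2*d) = w1*c" by simp
    hence "(w1*w2)*d = c*w1" by (simp add: ac_simps)
    thus ?thesis using h w12 by simp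
  qed
qed

lemma cst0_eq: "cst a * X1 + cst b * X2 = cst a * (X1 + cst (b/a) * X2)" if "a \<noteq> 0"
  using that by (simp add: cst_def algebra_simps)

lemma coh_refl: "coh_eq p p"
  unfolding coh_eq_def rel_ideal_def by (auto intro: exI[of _ 0])

lemma lin:
  fixes k p q :: complex
  assumes "k + p + q = 3*k" "k - p + q = k"
  shows "q = k \<and> p = k"
proof -
  have "q = p" using assms(2) by (simp add: algebra_simps)
  hence "2*p = 2*k" using assms(1) by (simp add: algebra_simps)
  thus ?thesis using \<open>q = p\<close> by simp
qed

theorem lemma4p3:
  fixes z1 z2 :: "complex poly poly"
  assumes "z1 \<in> H2" and "z2 \<in> H2"
    and "\<not> coh_eq z1 0" and "\<not> coh_eq z2 0"
    and "coh_eq (z1 * z2) 0"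
  shows "\<exists>l1 l2. l1 \<noteq> 0 \<and> l2 \<noteq> 0 \<and>
     ((coh_eq z1 (cst l1 * x_plus) \<and> coh_eq z2 (cst l2 * x_minus)) \<or>
      (coh_eq z1 (cst l1 * x_minus) \<and> coh_eq z2 (cst l2 * x_plus)))"
proof -
  obtain a b where z1: "z1 = cst a * X1 + cst b * X2" using assms(1) by (auto simp: H2_def)
  obtain c d where z2: "z2 = cst c * X1 + cst d * X2" using assms(2) by (auto simp: H2_def)
  have zero: "cst 0 * X1 + cst 0 * X2 = 0" by (simp add: cst_def)
  obtain k where hk: "\<And>s. (a + b*s) * (c + d*s) = k * (1 + s + s^2)"
    using key[of a b c d] assms(5) z1 z2 by blast
  have e1: "a*c = k" using hk[of 0] by simp
  have h1: "(a+b)*(c+d) = 3*k" using hk[of 1] by simp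
  have hm: "(a-b)*(c-d) = k" using hk[of "-1"] by (simp add: power2_eq_square)
  have "a*c + (a*d + b*c) + b*d = 3*k" using h1 by (simp add: algebra_simps)
  moreover have "a*c - (a*d + b*c) + b*d = k" using hm by (simp add: algebra_simps)
  ultimately have e2: "b*d = k" and e3: "a*d + b*c = k" using e1 lin[of k "a*d+b*c" "b*d"] by auto
  have nz1: "\<not> (a = 0 \<and> b = 0)" using assms(3) z1 zero coh_refl by auto
  have nz2: "\<not> (c = 0 \<and> d = 0)" using assms(4) z2 zero coh_refl by auto
  have "k \<noteq> 0"
  proof
    assume k0: "k = 0"
    show False
    proof (cases "a = 0")
      case True
      then have "b \<noteq> 0" using nz1 by auto
      hence "c = 0" "d = 0" using e2 e3 k0 True by auto
      thus False using nz2 by auto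
    next
      case False
      then have "c = 0" using e1 k0 by auto
      hence "d \<noteq> 0" using nz2 by auto
      hence "a = 0" using e3 k0 \<open>c = 0\<close> by auto
      thus False using False by auto
    qed
  qed
  hence nz: "a \<noteq> 0" "b \<noteq> 0" "c \<noteq> 0" "d \<noteq> 0" using e1 e2 by auto
  have xp: "x_plus = X1 + cst w1 * X2" unfolding x_plus_def w1_def ..
  have xm: "x_minus = X1 + cst w2 * X2" unfolding x_minus_def w2_def ..
  have Z1: "z1 = cst a * (X1 + cst (b/a) * X2)" using z1 cst0_eq nz by simp
  have Z2: "z2 = cst c * (X1 + cst (d/c) * X2)" using z2 cst0_eq nz by simp
  from roots[OF nz e1 e2 e3] show ?thesis
  proof
    assume h: "b = a*w1 \<and> d = c*w2"
    hence "b/a = w1" "d/c = w2" using nz by auto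
    hence "z1 = cst a * x_plus" "z2 = cst c * x_minus" using Z1 Z2 xp xm by auto
    thus ?thesis using nz coh_refl by blast
  next
    assume h: "b = a*w2 \<and> d = c*w1"
    hence "b/a = w2" "d/c = w1" using nz by auto
    hence "z1 = cst a * x_minus" "z2 = cst c * x_plus" using Z1 Z2 xp xm by auto
    thus ?thesis using nz coh_refl by blast
  qed
qed

end
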